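(* For every integer $n \geq 2$, $$CB_{n+1}(t)=(n+1)B_n(t)+2(n+1)\sum_{i=1}^{n}(t-1)^i B_{n-i}(t).$$
   Context: For $\pi=[\pi_1,\ldots,\pi_n]\in S_n$ (one-line notation), a pair $(\pi_i,\pi_{i+1})$ with $1\le i\le n-1$ is a (regular) bond if $\pi_i-\pi_{i+1}=\pm1$. The pair $(\pi_n,\pi_1)$ is an edge bond if $\pi_n-\pi_1=\pm1$. A cyclic bond is a regular bond or an edge bond. Let $bnd(\pi)$ be the number of regular bonds and $cbnd(\pi)$ the number of cyclic bonds of $\pi$. Define $B_0(t)=CB_0(t)=1$ and for $n\ge1$: $B_n(t)=\sum_{\pi\in S_n}t^{bnd(\pi)}$ and $CB_n(t)=\sum_{\pi\in S_n}t^{cbnd(\pi)}$. By these definitions, each permutation of $S_2$ has $2$ cyclic bonds, so $CB_2(t)=2t^2$, while $B_1(t)=CB_1(t)=1$, $B_2(t)=2t$. *)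

theory Defs
  imports "HOL-Combinatorics.Permutations" "HOL-Computational_Algebra.Polynomial"
begin

text \<open>A permutation of S_n is a bijection p of {1..n} (p permutes {1..n});
  its one-line notation is [p 1, ..., p n].\<close>

definition is_bond :: "nat \<Rightarrow> nat \<Rightarrow> bool" where
  "is_bond a b \<longleftrightarrow> (int a - int b = 1 \<or> int a - int b = -1)"

definition bnd :: "nat \<Rightarrow> (nat \<Rightarrow> nat) \<Rightarrow> nat" where
  "bnd n p = card {i \<in> {1..<n}. is_bond (p i) (p (i+1))}"

definition cbnd :: "nat \<Rightarrow> (nat \<Rightarrow> nat) \<Rightarrow> nat" where
  "cbnd n p = bnd n p + (if is_bond (p n) (p 1) then 1 else 0)"

definition B :: "nat \<Rightarrow> int poly" where
  "B n = (if n = 0 then 1 else (\<Sum>p \<in> {p. p permutes {1..n}}. [:0, 1:] ^ bnd n p))"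

definition CB :: "nat \<Rightarrow> int poly" where
  "CB n = (if n = 0 then 1 else (\<Sum>p \<in> {p. p permutes {1..n}}. [:0, 1:] ^ cbnd n p))"

end

theory Submission
  imports Defs
begin

abbreviation XX :: "int poly" where "XX \<equiv> [:0, 1:]"

lemma perm_fix_last:
  fixes m :: nat
  assumes "m \<ge> 1"
  shows "{p. p permutes {1..m} \<and> p m = m} = {p. p permutes {1..m-1}}"
proof (intro set_eqI iffI)
  fix p assume "p \<in> {p. p permutes {1..m} \<and> p m = m}"
  then have h: "p permutes {1..m}" "p m = m" by auto
  have "p permutes {1..m-1}"
  proof (rule permutes_superset[OF h(1)])
    fix x assume "x \<in> {1..m} - {1..m-1}"
    then have "x \<le> m" "\<not> x \<le> m - 1" by auto
    then have "x = m" by linarith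
    then show "p x = x" using h(2) by simp
  qed
  then show "p \<in> {p. p permutes {1..m-1}}" by simp
next
  fix p assume "p \<in> {p. p permutes {1..m-1}}"
  then have h: "p permutes {1..m-1}" by simp
  have "p permutes {1..m}" by (rule permutes_subset[OF h]) auto
  moreover have "p m = m" using permutes_not_in[OF h] assms by auto
  ultimately show "p \<in> {p. p permutes {1..m} \<and> p m = m}" by simp
qed

lemma bnd_Suc:
  assumes q: "q permutes {1..n}" and n: "n \<ge> 1"
  shows "bnd (Suc n) q = bnd n q + (if q n = n then 1 else 0)"
proof -
  let ?P = "\<lambda>i. is_bond (q i) (q (i+1))"
  have qn: "q n \<in> {1..n}" using permutes_in_image[OF q] n by auto
  have qS: "q (Suc n) = Suc n" using permutes_not_in[OF q] by auto
  have Pn: "?P n \<longleftrightarrow> q n = n" using qn qS unfolding is_bond_def by auto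
  have eq: "{i \<in> {1..<Suc n}. ?P i} = {i \<in> {1..<n}. ?P i} \<union> {i. i = n \<and> ?P i}"
    using n by auto
  have "card ({i \<in> {1..<n}. ?P i} \<union> {i. i = n \<and> ?P i}) =
        card {i \<in> {1..<n}. ?P i} + card {i. i = n \<and> ?P i}"
    by (rule card_Un_disjoint) auto
  moreover have "{i. i = n \<and> ?P i} = (if q n = n then {n} else {})"
    using Pn by auto
  then have "card {i. i = n \<and> ?P i} = (if q n = n then 1 else 0)"
    by simp
  ultimately show ?thesis unfolding bnd_def eq by simp
qed

definition EE :: "nat \<Rightarrow> int poly" where
  "EE m = (\<Sum>q \<in> {q \<in> {p. p permutes {1..m}}. q m = m}. XX ^ bnd m q)"

lemma EE_alt: "EE m = (\<Sum>q \<in> {p. p permutes {1..m}}. if q m = m then XX ^ bnd m q else 0)"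
  unfolding EE_def by (rule sum.inter_filter) (simp add: finite_permutations)

lemma EE_1: "EE 1 = 1"
proof -
  have "{q \<in> {p. p permutes {1..1::nat}}. q 1 = 1} = {p. p permutes {1..1-1::nat}}"
    using perm_fix_last[of 1] by auto
  also have "\<dots> = {id}" by simp
  finally have "EE 1 = XX ^ bnd 1 id" unfolding EE_def by simp
  also have "bnd 1 id = 0" unfolding bnd_def by simp
  finally show ?thesis by simp
qed

lemma EE_Suc:
  assumes m: "m \<ge> 1"
  shows "EE (Suc m) = B m + (XX - 1) * EE m"
proof -
  have "{q \<in> {p. p permutes {1..Suc m}}. q (Suc m) = Suc m} = {p. p permutes {1..m}}"
    using perm_fix_last[of "Suc m"] by auto
  then have "EE (Suc m) = (\<Sum>q \<in> {p. p permutes {1..m}}. XX ^ bnd (Suc m) q)"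
    unfolding EE_def by simp
  also have "\<dots> = (\<Sum>q \<in> {p. p permutes {1..m}}. XX ^ bnd m q + (if q m = m then (XX - 1) * XX ^ bnd m q else 0))"
  proof (rule sum.cong)
    fix q assume "q \<in> {p. p permutes {1..m}}"
    then have "bnd (Suc m) q = bnd m q + (if q m = m then 1 else 0)"
      using bnd_Suc m by auto
    then show "XX ^ bnd (Suc m) q = XX ^ bnd m q + (if q m = m then (XX - 1) * XX ^ bnd m q else 0)"
      by (simp add: power_add algebra_simps)
  qed simp
  also have "\<dots> = B m + (XX - 1) * EE m"
  proof -
    have "(XX - 1) * EE m = (\<Sum>q \<in> {p. p permutes {1..m}}. (if q m = m then (XX - 1) * XX ^ bnd m q else 0))"
      unfolding EE_alt sum_distrib_left by (rule sum.cong) auto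
    then show ?thesis unfolding B_def using m by (simp add: sum.distrib)
  qed
  finally show ?thesis .
qed

lemma EE_closed: "m \<ge> 1 \<Longrightarrow> EE m = (\<Sum>i<m. (XX - 1) ^ i * B (m - 1 - i))"
proof (induction m rule: nat_induct_at_least)
  case base
  then show ?case by (simp add: EE_1[simplified] B_def)
next
  case (Suc m)
  have "EE (Suc m) = B m + (XX - 1) * (\<Sum>i<m. (XX - 1) ^ i * B (m - 1 - i))"
    using EE_Suc[OF Suc(1)] Suc(2) by simp
  also have "\<dots> = (\<Sum>i<Suc m. (XX - 1) ^ i * B (Suc m - 1 - i))"
    by (subst sum.lessThan_Suc_shift) (simp add: sum_distrib_left algebra_simps)
  finally show ?case .
qed

lemma is_bond_sym: "is_bond a b = is_bond b a"
  unfolding is_bond_def by auto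

definition rv :: "nat \<Rightarrow> nat \<Rightarrow> nat" where
  "rv n i = (if i \<in> {1..n} then n + 1 - i else i)"

lemma rv_permutes: "rv n permutes {1..n}"
proof (rule bij_imp_permutes)
  show "bij_betw (rv n) {1..n} {1..n}"
    by (rule bij_betw_byWitness[where f' = "rv n"]) (auto simp: rv_def)
  show "\<And>x. x \<notin> {1..n} \<Longrightarrow> rv n x = x" by (auto simp: rv_def)
qed

lemma bnd_rev: "bnd n (q \<circ> rv n) = bnd n q"
proof -
  let ?A' = "{i \<in> {1..<n}. is_bond ((q \<circ> rv n) i) ((q \<circ> rv n) (i+1))}"
  let ?A = "{i \<in> {1..<n}. is_bond (q i) (q (i+1))}"
  have "bij_betw (\<lambda>i. n - i) ?A' ?A"
  proof (rule bij_betw_byWitness[where f' = "\<lambda>i. n - i"])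
    show "\<forall>a\<in>?A'. n - (n - a) = a" by auto
    show "\<forall>a\<in>?A. n - (n - a) = a" by auto
    show "(\<lambda>i. n - i) ` ?A' \<subseteq> ?A"
    proof
      fix j assume "j \<in> (\<lambda>i. n - i) ` ?A'"
      then obtain i where i: "i \<in> ?A'" "j = n - i" by auto
      then have r1: "rv n i = j + 1" and r2: "rv n (i+1) = j" and j: "j \<in> {1..<n}"
        by (auto simp: rv_def)
      have "is_bond (q (j+1)) (q j)" using i(1) r1 r2 by simp
      then show "j \<in> ?A" using j is_bond_sym by auto
    qed
    show "(\<lambda>i. n - i) ` ?A \<subseteq> ?A'"
    proof
      fix j assume "j \<in> (\<lambda>i. n - i) ` ?A"
      then obtain i where i: "i \<in> ?A" "j = n - i" by auto
      then have r1: "rv n j = i + 1" and r2: "rv n (j+1) = i" and j: "j \<in> {1..<n}"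
        by (auto simp: rv_def)
      have "is_bond (q i) (q (i+1))" using i(1) by simp
      then show "j \<in> ?A'" using j r1 r2 is_bond_sym by auto
    qed
  qed
  then show ?thesis unfolding bnd_def by (rule bij_betw_same_card)
qed

definition nx :: "nat \<Rightarrow> nat \<Rightarrow> nat" where
  "nx N i = (if i \<in> {1..<N} then i + 1 else if i = N then 1 else i)"

definition pv :: "nat \<Rightarrow> nat \<Rightarrow> nat" where
  "pv N i = (if i \<in> {2..N} then i - 1 else if i = 1 then N else i)"

lemma nx_bij:
  assumes "N \<ge> 2"
  shows "bij_betw (nx N) {1..N} {1..N}"
  by (rule bij_betw_byWitness[where f' = "pv N"]) (use assms in \<open>auto simp: nx_def pv_def\<close>)

lemma nx_permutes:
  assumes "N \<ge> 2"
  shows "nx N permutes {1..N}"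
  by (rule bij_imp_permutes[OF nx_bij[OF assms]]) (use assms in \<open>auto simp: nx_def\<close>)

lemma nx_facts:
  assumes "N \<ge> 2" "i \<in> {1..N}"
  shows "nx N i \<in> {1..N}" "pv N i \<in> {1..N}" "pv N (nx N i) = i" "nx N (pv N i) = i"
  using assms by (auto simp: nx_def pv_def)

lemma cb_alt:
  assumes N: "N \<ge> 2"
  shows "cbnd N p = card {i \<in> {1..N}. is_bond (p i) (p (nx N i))}"
proof -
  let ?P = "\<lambda>i. is_bond (p i) (p (i+1))"
  have eq: "{i \<in> {1..N}. is_bond (p i) (p (nx N i))} = {i \<in> {1..<N}. ?P i} \<union> {i. i = N \<and> is_bond (p N) (p 1)}"
  proof (intro set_eqI iffI)
    fix i assume "i \<in> {i \<in> {1..N}. is_bond (p i) (p (nx N i))}"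
    then show "i \<in> {i \<in> {1..<N}. ?P i} \<union> {i. i = N \<and> is_bond (p N) (p 1)}"
      by (cases "i = N") (auto simp: nx_def)
  next
    fix i assume "i \<in> {i \<in> {1..<N}. ?P i} \<union> {i. i = N \<and> is_bond (p N) (p 1)}"
    then show "i \<in> {i \<in> {1..N}. is_bond (p i) (p (nx N i))}"
      using N by (cases "i = N") (auto simp: nx_def)
  qed
  have "card ({i \<in> {1..<N}. ?P i} \<union> {i. i = N \<and> is_bond (p N) (p 1)}) =
        card {i \<in> {1..<N}. ?P i} + card {i. i = N \<and> is_bond (p N) (p 1)}"
    by (rule card_Un_disjoint) auto
  moreover have "{i. i = N \<and> is_bond (p N) (p 1)} = (if is_bond (p N) (p 1) then {N} else {})"
    by auto
  then have "card {i. i = N \<and> is_bond (p N) (p 1)} = (if is_bond (p N) (p 1) then 1 else 0)"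
    by simp
  ultimately show ?thesis unfolding cbnd_def bnd_def eq by simp
qed

lemma cb_rot:
  assumes N: "N \<ge> 2"
  shows "cbnd N (p \<circ> nx N) = cbnd N p"
proof -
  let ?Q = "\<lambda>j. is_bond (p j) (p (nx N j))"
  have "bij_betw (nx N) {i \<in> {1..N}. ?Q (nx N i)} {j \<in> {1..N}. ?Q j}"
  proof (rule bij_betw_byWitness[where f' = "pv N"])
    show "\<forall>a\<in>{i \<in> {1..N}. ?Q (nx N i)}. pv N (nx N a) = a" using nx_facts[OF N] by auto
    show "\<forall>a\<in>{j \<in> {1..N}. ?Q j}. nx N (pv N a) = a" using nx_facts[OF N] by auto
    show "nx N ` {i \<in> {1..N}. ?Q (nx N i)} \<subseteq> {j \<in> {1..N}. ?Q j}"
      using nx_facts(1)[OF N] by blast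
    show "pv N ` {j \<in> {1..N}. ?Q j} \<subseteq> {i \<in> {1..N}. ?Q (nx N i)}"
    proof
      fix x assume "x \<in> pv N ` {j \<in> {1..N}. ?Q j}"
      then obtain j where j: "j \<in> {1..N}" "?Q j" "x = pv N j" by auto
      then show "x \<in> {i \<in> {1..N}. ?Q (nx N i)}" using nx_facts[OF N j(1)] by simp
    qed
  qed
  then have "card {i \<in> {1..N}. ?Q (nx N i)} = card {j \<in> {1..N}. ?Q j}"
    by (rule bij_betw_same_card)
  then show ?thesis using cb_alt[OF N, of p] cb_alt[OF N, of "p \<circ> nx N"] by simp
qed

lemma CB_rot:
  assumes N: "N \<ge> 2"
  shows "CB N = of_nat N * (\<Sum>p\<in>{p. p permutes {1..N}}. if p N = N then XX ^ cbnd N p else 0)"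
proof -
  let ?P = "{p. p permutes {1..N}}"
  define f where "f p = XX ^ cbnd N p" for p
  define G where "G k = (\<Sum>p\<in>?P. if p k = N then f p else 0)" for k
  have Gstep: "G k = G (nx N k)" for k
  proof -
    have "G k = (\<Sum>p\<in>?P. (\<lambda>p. if p k = N then f p else 0) (p \<circ> nx N))"
      unfolding G_def by (rule sum_permutations_compose_right[OF nx_permutes[OF N]])
    also have "\<dots> = G (nx N k)"
      unfolding G_def f_def
    proof (rule sum.cong)
      fix p :: "nat \<Rightarrow> nat"
      have "cbnd N (p \<circ> nx N) = cbnd N p" by (rule cb_rot[OF N])
      then show "(if (p \<circ> nx N) k = N then XX ^ cbnd N (p \<circ> nx N) else 0) =
                 (if p (nx N k) = N then XX ^ cbnd N p else 0)" by simp
    qed simp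
    finally show ?thesis .
  qed
  have Gall: "d < N \<Longrightarrow> G (N - d) = G N" for d
  proof (induction d)
    case 0 then show ?case by simp
  next
    case (Suc d)
    have "nx N (N - Suc d) = N - d" using Suc.prems by (auto simp: nx_def)
    then have "G (N - Suc d) = G (N - d)" using Gstep[of "N - Suc d"] by simp
    then show ?case using Suc by simp
  qed
  have Gk: "k \<in> {1..N} \<Longrightarrow> G k = G N" for k
  proof -
    assume k: "k \<in> {1..N}"
    then have "N - (N - k) = k" "N - k < N" by auto
    then show ?thesis using Gall[of "N - k"] by metis
  qed
  have "CB N = (\<Sum>p\<in>?P. f p)" unfolding CB_def f_def using N by simp
  also have "\<dots> = (\<Sum>p\<in>?P. \<Sum>k\<in>{1..N}. if p k = N then f p else 0)"
  proof (rule sum.cong)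
    fix p assume "p \<in> ?P"
    then have p: "p permutes {1..N}" by simp
    have iv: "inv p N \<in> {1..N}"
      using permutes_in_image[OF permutes_inv[OF p]] N by auto
    have "(\<Sum>k\<in>{1..N}. if p k = N then f p else 0) = (\<Sum>k\<in>{1..N}. if inv p N = k then f p else 0)"
      by (rule sum.cong) (auto simp: permutes_inv_eq[OF p])
    also have "\<dots> = f p" using iv by simp
    finally show "f p = (\<Sum>k\<in>{1..N}. if p k = N then f p else 0)" by simp
  qed simp
  also have "\<dots> = (\<Sum>k\<in>{1..N}. G k)" unfolding G_def by (rule sum.swap)
  also have "\<dots> = (\<Sum>k\<in>{1..N}. G N)" by (rule sum.cong) (rule refl, erule Gk)
  also have "\<dots> = of_nat N * G N" by simp
  finally show ?thesis unfolding G_def f_def .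
qed

lemma R_eq:
  assumes n: "n \<ge> 1"
  shows "(\<Sum>q\<in>{p. p permutes {1..n}}. if q 1 = n then XX ^ bnd n q else 0) = EE n"
proof -
  have "(\<Sum>q\<in>{p. p permutes {1..n}}. if q 1 = n then XX ^ bnd n q else 0) =
        (\<Sum>q\<in>{p. p permutes {1..n}}. (\<lambda>q. if q 1 = n then XX ^ bnd n q else 0) (q \<circ> rv n))"
    by (rule sum_permutations_compose_right[OF rv_permutes])
  also have "\<dots> = (\<Sum>q\<in>{p. p permutes {1..n}}. if q n = n then XX ^ bnd n q else 0)"
  proof (rule sum.cong)
    fix q :: "nat \<Rightarrow> nat"
    have "rv n 1 = n" using n by (simp add: rv_def)
    then show "(if (q \<circ> rv n) 1 = n then XX ^ bnd n (q \<circ> rv n) else 0) =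
               (if q n = n then XX ^ bnd n q else 0)" by (simp add: bnd_rev)
  qed simp
  also have "\<dots> = EE n" by (simp add: EE_alt)
  finally show ?thesis .
qed

lemma G_last:
  assumes n: "n \<ge> 2"
  shows "(\<Sum>p\<in>{p. p permutes {1..Suc n}}. if p (Suc n) = Suc n then XX ^ cbnd (Suc n) p else 0)
         = B n + 2 * (XX - 1) * EE n"
proof -
  let ?P = "{p. p permutes {1..n}}"
  have "(\<Sum>p\<in>{p. p permutes {1..Suc n}}. if p (Suc n) = Suc n then XX ^ cbnd (Suc n) p else 0)
        = (\<Sum>p\<in>{q \<in> {p. p permutes {1..Suc n}}. q (Suc n) = Suc n}. XX ^ cbnd (Suc n) p)"
    by (rule sum.inter_filter[symmetric]) (simp add: finite_permutations)
  also have "{q \<in> {p. p permutes {1..Suc n}}. q (Suc n) = Suc n} = ?P"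
    using perm_fix_last[of "Suc n"] by auto
  also have "(\<Sum>q\<in>?P. XX ^ cbnd (Suc n) q) =
     (\<Sum>q\<in>?P. XX ^ bnd n q + (if q n = n then (XX - 1) * XX ^ bnd n q else 0)
                          + (if q 1 = n then (XX - 1) * XX ^ bnd n q else 0))"
  proof (rule sum.cong)
    fix q assume "q \<in> ?P"
    then have q: "q permutes {1..n}" by simp
    have q1: "q 1 \<in> {1..n}" using permutes_in_image[OF q] n by auto
    have qS: "q (Suc n) = Suc n" using permutes_not_in[OF q] by auto
    have b1: "is_bond (q (Suc n)) (q 1) \<longleftrightarrow> q 1 = n" using q1 qS unfolding is_bond_def by auto
    have ne: "\<not> (q n = n \<and> q 1 = n)"
    proof
      assume "q n = n \<and> q 1 = n"
      then have "q n = q 1" by simp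
      then have "n = 1" using permutes_inj[OF q] by (auto dest: injD)
      then show False using n by simp
    qed
    have c: "cbnd (Suc n) q = bnd n q + (if q n = n then 1 else 0) + (if q 1 = n then 1 else 0)"
      unfolding cbnd_def using bnd_Suc[OF q] n b1 by simp
    show "XX ^ cbnd (Suc n) q = XX ^ bnd n q + (if q n = n then (XX - 1) * XX ^ bnd n q else 0)
                          + (if q 1 = n then (XX - 1) * XX ^ bnd n q else 0)"
      unfolding c using ne by (auto simp: power_add algebra_simps)
  qed simp
  also have "\<dots> = B n + (XX - 1) * EE n + (XX - 1) * EE n"
  proof -
    have e1: "(XX - 1) * EE n = (\<Sum>q \<in> ?P. (if q n = n then (XX - 1) * XX ^ bnd n q else 0))"
      unfolding EE_alt sum_distrib_left by (rule sum.cong) auto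
    have e2: "(XX - 1) * EE n = (\<Sum>q \<in> ?P. (if q 1 = n then (XX - 1) * XX ^ bnd n q else 0))"
    proof -
      have ee: "EE n = (\<Sum>q\<in>?P. if q 1 = n then XX ^ bnd n q else 0)" using R_eq n by simp
      show ?thesis unfolding ee sum_distrib_left by (rule sum.cong) auto
    qed
    have bb: "B n = (\<Sum>q\<in>?P. XX ^ bnd n q)" using n by (simp add: B_def)
    show ?thesis unfolding sum.distrib e1[symmetric] e2[symmetric] bb ..
  qed
  finally show ?thesis by (simp add: algebra_simps)
qed

lemma XXm1: "[:-1, 1:] = XX - (1 :: int poly)"
  by (simp add: one_pCons)

theorem theorem2p1:
  fixes n :: nat
  assumes "n \<ge> 2"
  shows "CB (n + 1) = of_nat (n + 1) * B n
           + 2 * of_nat (n + 1) * (\<Sum>i = 1..n. [:-1, 1:] ^ i * B (n - i))"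
proof -
  have c: "CB (n + 1) = of_nat (n + 1) * (B n + 2 * (XX - 1) * EE n)"
    using CB_rot[of "Suc n"] G_last[OF assms] assms by simp
  moreover have s: "(\<Sum>i = 1..n. [:-1, 1:] ^ i * B (n - i)) = (XX - 1) * EE n"
  proof -
    have "(\<Sum>i = 1..n. [:-1, 1:] ^ i * B (n - i)) = (\<Sum>i<n. (XX - 1) ^ Suc i * B (n - Suc i))"
      unfolding XXm1 using sum.atLeast1_atMost_eq[where g = "\<lambda>i. (XX - 1) ^ i * B (n - i)" and n = n]
      by simp
    also have "\<dots> = (XX - 1) * EE n"
      using EE_closed[of n] assms by (simp add: sum_distrib_left algebra_simps)
    finally show ?thesis .
  qed
  show ?thesis unfolding c s by (simp only: algebra_simps)
qed

end
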